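(* Suppose one of the following holds: (i) $\mathcal{X}$ is compact and the state-space system defined by $f$ has the echo state property; or (ii) $f$ is a contraction in the first entry with a rate $c\in(0,|\mathbf{w}|^{-1})$, that is, $d_{\mathcal{X}}(f(x_1,u),f(x_2,u))\le c\,d_{\mathcal{X}}(x_1,x_2)$ for all $x_1,x_2\in\mathcal{X}$ and $u\in\mathcal{U}$. Then the associated filter $U_f$ exists as a map $U_f:\underline{\mathcal{U}}\to\underline{\mathcal{X}}$ and is continuous.
   Context: $\mathbb{Z}_-=\{\dots,-2,-1\}$; $\mathbb{N}=\{1,2,\dots\}$. $\mathcal{Z},\mathcal{U}$ Polish; $(\mathcal{X},d_{\mathcal{X}})$ Polish with complete metric; $f:\mathcal{X}\times\mathcal{U}\to\mathcal{X}$ continuous. $\underline{\mathcal{Z}}=\mathcal{Z}^{\mathbb{Z}_-}$ (product topology); $V:\underline{\mathcal{Z}}\to\mathcal{U}^{\mathbb{Z}_-}$ continuous and causal; $\underline{\mathcal{U}}=V(\underline{\mathcal{Z}})$ Polish with a metric $d_{\underline{\mathcal{U}}}$ inducing its topology. $\mathbf{w}=(w_t)_{t\le-1}\subseteq(0,1)$ monotone, summing to $1$, $|\mathbf{w}|:=\sup_{n\in\mathbb{N}}(\sup_tw_t/w_{t-n})^{1/n}<\infty$. Fix $x_*\in\mathcal{X}$. $\underline{\mathcal{X}}=\{\mathbf{x}\in\mathcal{X}^{\mathbb{Z}_-}:\sum_tw_td_{\mathcal{X}}(x_t,x_* )<\infty\}$ with metric $d_{\underline{\mathcal{X}}}(\mathbf{x}^1,\mathbf{x}^2)=\sum_tw_td_{\mathcal{X}}(x^1_t,x^2_t)$.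 $F(\mathbf{x},\mathbf{u})_t=f(x_{t-1},u_t)$ for $\mathbf{x}\in\mathcal{X}^{\mathbb{Z}_-},\mathbf{u}\in\mathcal{U}^{\mathbb{Z}_-}$; standing assumption: $F(\underline{\mathcal{X}}\times\underline{\mathcal{U}})\subseteq\underline{\mathcal{X}}$ and $F:\underline{\mathcal{X}}\times\underline{\mathcal{U}}\to\underline{\mathcal{X}}$ is continuous. Echo state property: for every $\mathbf{u}\in\mathcal{U}^{\mathbb{Z}_-}$ there is a unique $\mathbf{x}\in\mathcal{X}^{\mathbb{Z}_-}$ with $\mathbf{x}=F(\mathbf{x},\mathbf{u})$; the associated filter $U_f$ maps $\mathbf{u}$ to this unique solution $\mathbf{x}$ (on whichever set of inputs the solution exists and is unique; in case (ii) the conclusion includes that for each $\mathbf{u}\in\underline{\mathcal{U}}$ there is a unique solution $\mathbf{x}\in\underline{\mathcal{X}}$). *)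

theory Defs
  imports "HOL-Analysis.Analysis"
begin

text \<open>Left-infinite sequences indexed by Z_- = {...,-2,-1} are encoded as
  functions on nat: index n stands for time t = -(n+1). Thus x_{t-1} corresponds to x (Suc n).
  The type nat => 'a carries the product topology (library instance), so
  Z-bar = nat => 'z and U^{Z_-} = nat => 'u carry the product topology.\<close>

definition Polish_top :: "'a topology \<Rightarrow> bool" where
  "Polish_top X \<longleftrightarrow> completely_metrizable_space X \<and> separable_space X"

definition causal :: "((nat \<Rightarrow> 'z) \<Rightarrow> (nat \<Rightarrow> 'u)) \<Rightarrow> bool" where
  "causal V \<longleftrightarrow> (\<forall>z z' n. (\<forall>m\<ge>n. z m = z' m) \<longrightarrow> V z n = V z' n)"

definition wsup :: "(nat \<Rightarrow> real) \<Rightarrow> nat \<Rightarrow> real" where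
  "wsup w n = (SUP k. w k / w (k + n))"

definition wnorm :: "(nat \<Rightarrow> real) \<Rightarrow> real" where
  "wnorm w = (SUP n\<in>{1..}. wsup w n powr (1 / real n))"

definition wnorm_finite :: "(nat \<Rightarrow> real) \<Rightarrow> bool" where
  "wnorm_finite w \<longleftrightarrow> (\<forall>n\<ge>1. bdd_above (range (\<lambda>k. w k / w (k + n))))
      \<and> bdd_above ((\<lambda>n. wsup w n powr (1 / real n)) ` {1..})"

definition weights :: "(nat \<Rightarrow> real) \<Rightarrow> bool" where
  "weights w \<longleftrightarrow> (\<forall>n. 0 < w n \<and> w n < 1) \<and> decseq w \<and> w sums 1 \<and> wnorm_finite w"

definition Xbar :: "(nat \<Rightarrow> real) \<Rightarrow> 'x::metric_space \<Rightarrow> (nat \<Rightarrow> 'x) set" where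
  "Xbar w xs = {x. summable (\<lambda>n. w n * dist (x n) xs)}"

definition dXbar :: "(nat \<Rightarrow> real) \<Rightarrow> (nat \<Rightarrow> 'x::metric_space) \<Rightarrow> (nat \<Rightarrow> 'x) \<Rightarrow> real" where
  "dXbar w x1 x2 = (\<Sum>n. w n * dist (x1 n) (x2 n))"

definition Fsys :: "('x \<Rightarrow> 'u \<Rightarrow> 'x) \<Rightarrow> (nat \<Rightarrow> 'x) \<Rightarrow> (nat \<Rightarrow> 'u) \<Rightarrow> (nat \<Rightarrow> 'x)" where
  "Fsys f x u = (\<lambda>n. f (x (Suc n)) (u n))"

definition ESP :: "('x \<Rightarrow> 'u \<Rightarrow> 'x) \<Rightarrow> bool" where
  "ESP f \<longleftrightarrow> (\<forall>u. \<exists>!x. x = Fsys f x u)"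

end

theory Submission
  imports Defs
begin


lemma w_props:
  assumes "weights w"
  shows "\<And>n. 0 < w n" "summable w" "suminf w = 1"
  using assms unfolding weights_def by (auto simp: sums_iff)

lemma wterm_nonneg:
  assumes "weights w" shows "0 \<le> w n * dist a b"
  using w_props(1)[OF assms, of n] by simp

lemma Xbar_summable:
  assumes w: "weights w" and x: "x \<in> Xbar w xs" and y: "y \<in> Xbar w xs"
  shows "summable (\<lambda>n. w n * dist (x n) (y n))"
proof (rule summable_comparison_test'[where g="\<lambda>n. w n * dist (x n) xs + w n * dist (y n) xs"])
  show "summable (\<lambda>n. w n * dist (x n) xs + w n * dist (y n) xs)"
    using x y by (intro summable_add) (auto simp: Xbar_def)
  fix n :: nat
  have "dist (x n) (y n) \<le> dist (x n) xs + dist (y n) xs" by (rule dist_triangle2)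
  then have "w n * dist (x n) (y n) \<le> w n * (dist (x n) xs + dist (y n) xs)"
    using w_props(1)[OF w, of n] by (intro mult_left_mono) auto
  then show "norm (w n * dist (x n) (y n)) \<le> w n * dist (x n) xs + w n * dist (y n) xs"
    using w_props(1)[OF w, of n] by (simp add: algebra_simps)
qed

lemma dXbar_nonneg:
  assumes w: "weights w" and x: "x \<in> Xbar w xs" and y: "y \<in> Xbar w xs"
  shows "0 \<le> dXbar w x y"
  unfolding dXbar_def using Xbar_summable[OF assms] wterm_nonneg[OF w]
  by (intro suminf_nonneg) auto

lemma dXbar_sym: "dXbar w x y = dXbar w y x"
  by (simp add: dXbar_def dist_commute)

lemma dXbar_self: "dXbar w x x = 0"
  by (simp add: dXbar_def)

lemma dXbar_triangle:
  assumes w: "weights w" and x: "x \<in> Xbar w xs" and y: "y \<in> Xbar w xs" and z: "z \<in> Xbar w xs"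
  shows "dXbar w x z \<le> dXbar w x y + dXbar w y z"
proof -
  have s1: "summable (\<lambda>n. w n * dist (x n) (y n))" using Xbar_summable[OF w x y] .
  have s2: "summable (\<lambda>n. w n * dist (y n) (z n))" using Xbar_summable[OF w y z] .
  have s3: "summable (\<lambda>n. w n * dist (x n) (z n))" using Xbar_summable[OF w x z] .
  have "dXbar w x y + dXbar w y z = (\<Sum>n. w n * dist (x n) (y n) + w n * dist (y n) (z n))"
    unfolding dXbar_def using suminf_add[OF s1 s2] .
  moreover have "dXbar w x z \<le> (\<Sum>n. w n * dist (x n) (y n) + w n * dist (y n) (z n))"
    unfolding dXbar_def
  proof (rule suminf_le[OF _ s3 summable_add[OF s1 s2]])
    fix n
    have "w n * dist (x n) (z n) \<le> w n * (dist (x n) (y n) + dist (y n) (z n))"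
      using w_props(1)[OF w, of n] dist_triangle[of "x n" "z n" "y n"]
      by (intro mult_left_mono) auto
    then show "w n * dist (x n) (z n) \<le> w n * dist (x n) (y n) + w n * dist (y n) (z n)"
      by (simp add: algebra_simps)
  qed
  ultimately show ?thesis by simp
qed

lemma dXbar_term:
  assumes w: "weights w" and x: "x \<in> Xbar w xs" and y: "y \<in> Xbar w xs"
  shows "w n * dist (x n) (y n) \<le> dXbar w x y"
proof -
  have "sum (\<lambda>n. w n * dist (x n) (y n)) {n} \<le> dXbar w x y"
    unfolding dXbar_def using Xbar_summable[OF assms] wterm_nonneg[OF w]
    by (intro sum_le_suminf) auto
  then show ?thesis by simp
qed

lemma dXbar_partial:
  assumes w: "weights w" and x: "x \<in> Xbar w xs" and y: "y \<in> Xbar w xs"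
  shows "(\<Sum>n\<le>N. w n * dist (x n) (y n)) \<le> dXbar w x y"
  unfolding dXbar_def using Xbar_summable[OF assms] wterm_nonneg[OF w]
  by (intro sum_le_suminf) auto

lemma dXbar_zero:
  assumes w: "weights w" and x: "x \<in> Xbar w xs" and y: "y \<in> Xbar w xs"
    and z: "dXbar w x y \<le> 0"
  shows "x = y"
proof
  fix n
  have "w n * dist (x n) (y n) \<le> 0" using dXbar_term[OF w x y, of n] z by linarith
  then have "dist (x n) (y n) \<le> 0" using w_props(1)[OF w, of n]
    by (simp add: mult_le_0_iff)
  then show "x n = y n" by simp
qed

lemma wsup1:
  assumes w: "weights w"
  shows "\<And>n. w n \<le> wsup w 1 * w (Suc n)" "wsup w 1 \<le> wnorm w" "0 < wsup w 1"
proof -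
  have bdd: "bdd_above (range (\<lambda>k. w k / w (k + 1)))"
    using w unfolding weights_def wnorm_finite_def by auto
  have le: "w k / w (k + 1) \<le> wsup w 1" for k
    unfolding wsup_def by (rule cSUP_upper[OF _ bdd]) auto
  show "w n \<le> wsup w 1 * w (Suc n)" for n
    using le[of n] w_props(1)[OF w, of "Suc n"] by (simp add: divide_le_eq)
  show pos: "0 < wsup w 1"
  proof -
    have "0 < w 0 / w (0 + 1)" using w_props(1)[OF w, of 0] w_props(1)[OF w, of 1] by simp
    then show ?thesis using le[of 0] by linarith
  qed
  have bdd2: "bdd_above ((\<lambda>n. wsup w n powr (1 / real n)) ` {1..})"
    using w unfolding weights_def wnorm_finite_def by auto
  have "wsup w 1 powr (1 / real 1) \<le> wnorm w"
    unfolding wnorm_def by (rule cSUP_upper[OF _ bdd2]) auto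
  then show "wsup w 1 \<le> wnorm w" using pos by simp
qed

lemma Fsys_contr:
  assumes w: "weights w" and c: "0 < c" and L: "\<forall>x1 x2 u. dist (f x1 u) (f x2 u) \<le> c * dist x1 x2"
    and x: "x \<in> Xbar w xs" and y: "y \<in> Xbar w xs"
  shows "dXbar w (Fsys f x u) (Fsys f y u) \<le> c * wnorm w * dXbar w x y"
proof -
  define K where "K = wsup w 1"
  define g where "g = (\<lambda>n. w (Suc n) * dist (x (Suc n)) (y (Suc n)))"
  have sxy: "summable (\<lambda>n. w n * dist (x n) (y n))" using Xbar_summable[OF w x y] .
  have sg: "summable g" unfolding g_def using sxy by (subst summable_Suc_iff)
  have sg2: "summable (\<lambda>n. (c * K) * g n)" using sg by (rule summable_mult)
  have hterm: "w n * dist (Fsys f x u n) (Fsys f y u n) \<le> (c * K) * g n" for n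
  proof -
    have "w n * dist (Fsys f x u n) (Fsys f y u n) \<le> w n * (c * dist (x (Suc n)) (y (Suc n)))"
      unfolding Fsys_def using L w_props(1)[OF w, of n] by (intro mult_left_mono) auto
    also have "\<dots> \<le> (K * w (Suc n)) * (c * dist (x (Suc n)) (y (Suc n)))"
      using wsup1(1)[OF w, of n] c unfolding K_def by (intro mult_right_mono) auto
    finally show ?thesis by (simp add: g_def algebra_simps)
  qed
  have sF: "summable (\<lambda>n. w n * dist (Fsys f x u n) (Fsys f y u n))"
    apply (rule summable_comparison_test'[OF sg2])
    using hterm w_props(1)[OF w] by (simp add: less_imp_le)
  have "dXbar w (Fsys f x u) (Fsys f y u) \<le> (\<Sum>n. (c * K) * g n)"
    unfolding dXbar_def by (rule suminf_le[OF hterm sF sg2])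
  also have "\<dots> = (c * K) * suminf g" using suminf_mult[OF sg] by simp
  also have "suminf g = dXbar w x y - w 0 * dist (x 0) (y 0)"
    unfolding g_def dXbar_def using suminf_split_head[OF sxy] by simp
  also have "\<dots> \<le> dXbar w x y" using w_props(1)[OF w, of 0] by simp
  finally have 1: "dXbar w (Fsys f x u) (Fsys f y u) \<le> (c * K) * dXbar w x y"
    using c wsup1(3)[OF w] unfolding K_def by (simp add: mult_left_mono)
  have "(c * K) * dXbar w x y \<le> (c * wnorm w) * dXbar w x y"
    using c wsup1(2)[OF w] dXbar_nonneg[OF w x y] unfolding K_def
    by (intro mult_right_mono) auto
  with 1 show ?thesis by simp
qed


lemma exist_fp:
  fixes f :: "'x::polish_space \<Rightarrow> 'u::metric_space \<Rightarrow> 'x"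
  assumes w: "weights w" and f_cont: "continuous_on UNIV (\<lambda>p. f (fst p) (snd p))"
   and Fm: "\<forall>x\<in>Xbar w xs. Fsys f x u \<in> Xbar w xs"
   and contr: "\<forall>x\<in>Xbar w xs. \<forall>y\<in>Xbar w xs. dXbar w (Fsys f x u) (Fsys f y u) \<le> q * dXbar w x y"
   and q: "0 \<le> q" "q < 1"
  shows "\<exists>y\<in>Xbar w xs. y = Fsys f y u"
proof -
  define G where "G = (\<lambda>x. Fsys f x u)"
  define X where "X = (\<lambda>m. (G ^^ m) (\<lambda>_. xs))"
  have X0: "X 0 \<in> Xbar w xs" by (simp add: X_def Xbar_def)
  have XS: "X (Suc m) = G (X m)" for m by (simp add: X_def)
  have Xin: "X m \<in> Xbar w xs" for m
    by (induction m) (use X0 Fm in \<open>auto simp: XS G_def\<close>)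
  define D0 where "D0 = dXbar w (X 1) (X 0)"
  have D0: "0 \<le> D0" unfolding D0_def using dXbar_nonneg[OF w Xin Xin] .
  have step: "dXbar w (X (Suc m)) (X m) \<le> q^m * D0" for m
  proof (induction m)
    case 0 show ?case by (simp add: D0_def)
  next
    case (Suc m)
    have "dXbar w (X (Suc (Suc m))) (X (Suc m)) \<le> q * dXbar w (X (Suc m)) (X m)"
    proof -
      have "dXbar w (G (X (Suc m))) (G (X m)) \<le> q * dXbar w (X (Suc m)) (X m)"
        using contr Xin unfolding G_def by blast
      then show ?thesis by (metis XS)
    qed
    also have "\<dots> \<le> q * (q^m * D0)" using Suc q by (intro mult_left_mono) auto
    finally show ?case by simp
  qed
  have far0: "dXbar w (X (m + k)) (X m) \<le> (\<Sum>j<k. q^(m+j)) * D0" for m k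
  proof (induction k)
    case 0 show ?case by (simp add: dXbar_self)
  next
    case (Suc k)
    have "dXbar w (X (m + Suc k)) (X m) \<le> dXbar w (X (Suc (m + k))) (X (m + k)) + dXbar w (X (m + k)) (X m)"
      using dXbar_triangle[OF w Xin Xin Xin] by simp
    also have "\<dots> \<le> q^(m+k) * D0 + (\<Sum>j<k. q^(m+j)) * D0"
      using step[of "m+k"] Suc by linarith
    finally show ?case by (simp add: algebra_simps)
  qed
  have geo: "(\<Sum>j<k. q^(m+j)) \<le> q^m / (1 - q)" for m k
  proof -
    have "(\<Sum>j<k. q^j) \<le> (\<Sum>j. q^j)"
      using q by (intro sum_le_suminf) (auto intro: summable_geometric)
    also have "\<dots> = 1 / (1 - q)" using q by (intro suminf_geometric) auto
    finally have "q^m * (\<Sum>j<k. q^j) \<le> q^m * (1 / (1 - q))"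
      using q by (intro mult_left_mono) auto
    then show ?thesis by (simp add: power_add sum_distrib_left)
  qed
  define B where "B = D0 / (1 - q)"
  have B: "0 \<le> B" unfolding B_def using D0 q by auto
  have far: "dXbar w (X (m + k)) (X m) \<le> q^m * B" for m k
  proof -
    have "dXbar w (X (m + k)) (X m) \<le> (q^m / (1 - q)) * D0"
      using far0[of m k] geo[of m k] D0 by (meson mult_right_mono order_trans)
    then show ?thesis by (simp add: B_def)
  qed
  have coord: "dist (X (m + k) n) (X m n) \<le> q^m * (B / w n)" for m k n
  proof -
    have "w n * dist (X (m + k) n) (X m n) \<le> q^m * B"
      using dXbar_term[OF w Xin Xin] far order_trans by blast
    then show ?thesis using w_props(1)[OF w, of n] by (simp add: field_simps)
  qed
  have cauchy: "Cauchy (\<lambda>k. X k n)" for n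
  proof (rule metric_CauchyI)
    fix e :: real assume e: "0 < e"
    have "(\<lambda>m. q^m * (B / w n)) \<longlonglongrightarrow> 0 * (B / w n)"
      using q by (intro tendsto_mult_right LIMSEQ_power_zero) auto
    then obtain M where M: "\<forall>m\<ge>M. norm (q^m * (B / w n) - 0) < e / 2"
    proof -
      from \<open>(\<lambda>m. q^m * (B / w n)) \<longlonglongrightarrow> 0 * (B / w n)\<close> have "\<exists>M. \<forall>m\<ge>M. dist (q^m * (B / w n)) (0 * (B / w n)) < e / 2"
        unfolding LIMSEQ_def using e half_gt_zero by blast
      then show ?thesis using that by (auto simp: dist_real_def)
    qed
    have h: "norm (q^M * (B / w n) - 0) < e / 2" using M by blast
    have bM: "q^M * (B / w n) < e / 2"
    proof -
      have "q^M * (B / w n) \<le> norm (q^M * (B / w n) - 0)"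
        unfolding diff_zero real_norm_def by (rule abs_ge_self)
      then show ?thesis using h by linarith
    qed
    show "\<exists>M. \<forall>a\<ge>M. \<forall>b\<ge>M. dist (X a n) (X b n) < e"
    proof (intro exI allI impI)
      fix a b assume a: "M \<le> a" and b: "M \<le> b"
      have da: "dist (X a n) (X M n) \<le> q^M * (B / w n)" using coord[of M "a - M" n] a by simp
      have db: "dist (X b n) (X M n) \<le> q^M * (B / w n)" using coord[of M "b - M" n] b by simp
      show "dist (X a n) (X b n) < e"
      proof -
        define K where "K = q^M * (B / w n)"
        have "dist (X a n) (X b n) \<le> K + K"
          using dist_triangle2[of "X a n" "X b n" "X M n"] da db unfolding K_def
          by (meson add_mono order_trans)
        moreover have "K < e / 2" using bM unfolding K_def .
        ultimately show ?thesis by linarith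
      qed
    qed
  qed
  define y where "y = (\<lambda>n. lim (\<lambda>k. X k n))"
  have lim: "(\<lambda>k. X k n) \<longlonglongrightarrow> y n" for n
    unfolding y_def using cauchy[of n] by (simp add: Cauchy_convergent_iff convergent_LIMSEQ_iff)
  have fix_y: "y = Fsys f y u"
  proof
    fix n
    have "(\<lambda>k. X (Suc k) n) \<longlonglongrightarrow> y n" using lim[of n] by (rule LIMSEQ_Suc)
    moreover have "(\<lambda>k. X (Suc k) n) = (\<lambda>k. (\<lambda>p. f (fst p) (snd p)) (X k (Suc n), u n))"
      by (simp add: XS G_def Fsys_def)
    moreover have "(\<lambda>k. (\<lambda>p. f (fst p) (snd p)) (X k (Suc n), u n)) \<longlonglongrightarrow> (\<lambda>p. f (fst p) (snd p)) (y (Suc n), u n)"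
    proof (rule isCont_tendsto_compose[where g="\<lambda>p. f (fst p) (snd p)"])
      show "isCont (\<lambda>p. f (fst p) (snd p)) (y (Suc n), u n)"
        using f_cont by (simp add: continuous_on_eq_continuous_at)
      show "(\<lambda>k. (X k (Suc n), u n)) \<longlonglongrightarrow> (y (Suc n), u n)"
        using lim[of "Suc n"] by (intro tendsto_Pair) auto
    qed
    ultimately show "y n = Fsys f y u n"
      using LIMSEQ_unique by (fastforce simp: Fsys_def)
  qed
  have yin: "y \<in> Xbar w xs"
    unfolding Xbar_def
  proof (simp, rule bounded_imp_summable)
    show "0 \<le> w n * dist (y n) xs" for n using wterm_nonneg[OF w] .
    fix N
    have "(\<lambda>k. \<Sum>n\<le>N. w n * dist (X k n) (X 0 n)) \<longlonglongrightarrow> (\<Sum>n\<le>N. w n * dist (y n) xs)"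
      by (intro tendsto_sum tendsto_mult_left tendsto_dist lim) (simp add: X_def)
    moreover have "\<forall>k\<ge>0. (\<Sum>n\<le>N. w n * dist (X k n) (X 0 n)) \<le> B"
      using dXbar_partial[OF w Xin Xin] far[of 0] by (metis add_0 order_trans power_0 mult_1)
    ultimately show "(\<Sum>n\<le>N. w n * dist (y n) xs) \<le> B"
      by (intro LIMSEQ_le_const2) auto
  qed
  show ?thesis using yin fix_y by blast
qed


lemma compact_fun_UNIV:
  assumes "compact (UNIV::'a::topological_space set)"
  shows "compact (UNIV :: (nat \<Rightarrow> 'a) set)"
proof -
  have "compact_space (euclidean::'a topology)" using assms by (simp add: compact_space_def)
  then have "compact_space (product_topology (\<lambda>_. (euclidean::'a topology)) (UNIV::nat set))"
    unfolding compact_space_product_topology by blast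
  then have "compact_space (euclidean :: (nat \<Rightarrow> 'a) topology)"
    unfolding euclidean_product_topology .
  then show ?thesis by (simp add: compact_space_def)
qed

lemma isCont_coord: "isCont (\<lambda>x::nat \<Rightarrow> 'a::metric_space. x n) y"
  by (metis continuous_on_product_coordinates continuous_on_eq_continuous_at open_UNIV UNIV_I)

lemma case_i:
  fixes f :: "'x::polish_space \<Rightarrow> 'u::polish_space \<Rightarrow> 'x"
  assumes w: "weights w" and f_cont: "continuous_on UNIV (\<lambda>p. f (fst p) (snd p))"
    and comp: "compact (UNIV :: 'x set)" and esp: "ESP f"
  shows "\<exists>Uf. (\<forall>u. Uf u \<in> Xbar w xs \<and> Uf u = Fsys f (Uf u) u \<and> (\<forall>x. x = Fsys f x u \<longrightarrow> x = Uf u))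
     \<and> (\<forall>u. \<forall>e>0. \<exists>N. open N \<and> u \<in> N \<and> (\<forall>u'\<in>N. dXbar w (Uf u') (Uf u) < e))"
proof -
  define Uf where "Uf = (\<lambda>u. THE x. x = Fsys f x u)"
  have ex1: "\<exists>!x. x = Fsys f x u" for u using esp unfolding ESP_def by blast
  have fp: "Uf u = Fsys f (Uf u) u" for u
    unfolding Uf_def using theI'[OF ex1[of u]] .
  have uniq: "x = Fsys f x u \<Longrightarrow> x = Uf u" for x u
    unfolding Uf_def using the1_equality[OF ex1[of u]] by simp
  obtain r where r: "\<forall>y\<in>UNIV. dist xs y \<le> r"
    using compact_imp_bounded[OF comp] bounded_any_center[of UNIV xs] by blast
  define D where "D = 2 * r"
  have Dd: "dist a b \<le> D" for a b :: 'x
  proof -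
    have "dist xs a \<le> r" "dist xs b \<le> r" using r by auto
    then show ?thesis using dist_triangle3[of a b xs] unfolding D_def by linarith
  qed
  have D0: "0 \<le> D" using Dd[of xs xs] by simp
  have inX: "x \<in> Xbar w xs" for x :: "nat \<Rightarrow> 'x"
    unfolding Xbar_def
  proof (simp, rule summable_comparison_test'[where g="\<lambda>n. D * w n"])
    show "summable (\<lambda>n. D * w n)" using w_props(2)[OF w] by (rule summable_mult)
    show "norm (w n * dist (x n) xs) \<le> D * w n" for n
      using Dd[of "x n" xs] w_props(1)[OF w, of n] by (simp add: mult.commute mult_left_mono)
  qed
  have seqc: "(\<lambda>k. Uf (s k)) \<longlonglongrightarrow> Uf u" if su: "s \<longlonglongrightarrow> u" for s u
  proof (rule ccontr)
    assume nc: "\<not> (\<lambda>k. Uf (s k)) \<longlonglongrightarrow> Uf u"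
    then obtain \<epsilon> where \<epsilon>: "\<epsilon> > 0" and ne: "\<not> eventually (\<lambda>k. dist (Uf (s k)) (Uf u) < \<epsilon>) sequentially"
      by (auto simp: tendsto_iff)
    have "frequently (\<lambda>k. \<not> dist (Uf (s k)) (Uf u) < \<epsilon>) sequentially"
      using ne by (simp add: not_eventually)
    then have "infinite {k. \<not> dist (Uf (s k)) (Uf u) < \<epsilon>}"
      by (simp add: frequently_cofinite[symmetric] cofinite_eq_sequentially)
    then obtain r1 :: "nat \<Rightarrow> nat" where r1: "strict_mono r1" "\<forall>k. r1 k \<in> {k. \<not> dist (Uf (s k)) (Uf u) < \<epsilon>}"
      using infinite_enumerate by blast
    have "seq_compact (UNIV :: (nat \<Rightarrow> 'x) set)"
      by (rule compact_imp_seq_compact[OF compact_fun_UNIV[OF comp]])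
    then obtain l r2 where r2: "strict_mono r2" and l: "((\<lambda>k. Uf (s (r1 k))) \<circ> r2) \<longlonglongrightarrow> l"
      unfolding seq_compact_def by blast
    define t where "t = (\<lambda>k. s (r1 (r2 k)))"
    have tl: "t \<longlonglongrightarrow> u"
      using LIMSEQ_subseq_LIMSEQ[OF LIMSEQ_subseq_LIMSEQ[OF su r1(1)] r2] unfolding t_def by (simp add: o_def)
    have Ul: "(\<lambda>k. Uf (t k)) \<longlonglongrightarrow> l" using l unfolding t_def by (simp add: o_def)
    have pt: "(\<lambda>k. Uf (t k) n) \<longlonglongrightarrow> l n" for n
      by (rule isCont_tendsto_compose[OF isCont_coord Ul])
    have pu: "(\<lambda>k. t k n) \<longlonglongrightarrow> u n" for n
      by (rule isCont_tendsto_compose[OF isCont_coord tl])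
    have "l = Fsys f l u"
    proof
      fix n
      have "(\<lambda>k. (\<lambda>p. f (fst p) (snd p)) (Uf (t k) (Suc n), t k n)) \<longlonglongrightarrow> (\<lambda>p. f (fst p) (snd p)) (l (Suc n), u n)"
      proof (rule isCont_tendsto_compose[where g="\<lambda>p. f (fst p) (snd p)"])
        show "isCont (\<lambda>p. f (fst p) (snd p)) (l (Suc n), u n)"
          using f_cont by (simp add: continuous_on_eq_continuous_at)
        show "(\<lambda>k. (Uf (t k) (Suc n), t k n)) \<longlonglongrightarrow> (l (Suc n), u n)"
          using pt pu by (intro tendsto_Pair) auto
      qed
      moreover have "(\<lambda>k. Uf (t k) n) = (\<lambda>k. (\<lambda>p. f (fst p) (snd p)) (Uf (t k) (Suc n), t k n))"
      proof
        fix k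
        show "Uf (t k) n = (\<lambda>p. f (fst p) (snd p)) (Uf (t k) (Suc n), t k n)"
          using fun_cong[OF fp[of "t k"], of n] unfolding Fsys_def by simp
      qed
      ultimately show "l n = Fsys f l u n"
        using pt[of n] LIMSEQ_unique by (fastforce simp: Fsys_def)
    qed
    then have "l = Uf u" by (rule uniq)
    then have "eventually (\<lambda>k. dist (Uf (t k)) (Uf u) < \<epsilon>) sequentially"
      using Ul \<epsilon> by (auto simp: tendsto_iff)
    moreover have "\<not> dist (Uf (t k)) (Uf u) < \<epsilon>" for k
      using r1(2) unfolding t_def by auto
    ultimately show False by auto
  qed
  have cont: "isCont Uf u" for u
    by (rule continuous_at_sequentiallyI) (rule seqc)
  have ccont: "((\<lambda>v. Uf v n) \<longlongrightarrow> Uf u n) (at u)" for u n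
  proof -
    have "isCont ((\<lambda>x. x n) \<circ> Uf) u" by (rule continuous_at_compose[OF cont isCont_coord])
    then show ?thesis by (simp add: continuous_at o_def)
  qed
  have main: "\<exists>N. open N \<and> u \<in> N \<and> (\<forall>u'\<in>N. dXbar w (Uf u') (Uf u) < e)" if e: "e > 0" for u e
  proof -
    define \<rho> where "\<rho> = e / (2 * (D + 1))"
    have \<rho>: "0 < \<rho>" unfolding \<rho>_def using e D0 by auto
    obtain M where M: "\<forall>m\<ge>M. norm (\<Sum>i. w (i + m)) < \<rho>"
      using suminf_exist_split[OF \<rho> w_props(2)[OF w]] by blast
    have tail: "(\<Sum>i. w (i + M)) < \<rho>" using M by auto
    define \<delta> where "\<delta> = e / 4"
    have \<delta>: "0 < \<delta>" using e unfolding \<delta>_def by auto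
    have ev: "eventually (\<lambda>v. \<forall>n\<in>{..<M}. dist (Uf v n) (Uf u n) < \<delta>) (at u)"
      using ccont \<delta> by (intro eventually_ball_finite) (auto simp: tendsto_iff)
    then obtain S where S: "open S" "u \<in> S" "\<And>v. v \<in> S \<Longrightarrow> v \<noteq> u \<Longrightarrow> \<forall>n\<in>{..<M}. dist (Uf v n) (Uf u n) < \<delta>"
      unfolding eventually_at_topological by auto
    have bound: "dXbar w (Uf v) (Uf u) < e" if v: "v \<in> S" for v
    proof (cases "v = u")
      case True then show ?thesis using e by (simp add: dXbar_self)
    next
      case False
      have cl: "\<forall>n<M. dist (Uf v n) (Uf u n) < \<delta>" using S(3)[OF v False] by auto
      define a where "a = (\<lambda>n. w n * dist (Uf v n) (Uf u n))"
      have sa: "summable a" unfolding a_def by (rule Xbar_summable[OF w inX inX])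
      have split: "dXbar w (Uf v) (Uf u) = (\<Sum>i. a (i + M)) + (\<Sum>i<M. a i)"
        unfolding dXbar_def a_def[symmetric] by (rule suminf_split_initial_segment[OF sa])
      have sw: "summable (\<lambda>i. w (i + M))" using w_props(2)[OF w] by (rule summable_ignore_initial_segment)
      have "(\<Sum>i. a (i + M)) \<le> (\<Sum>i. D * w (i + M))"
      proof (rule suminf_le)
        show "a (i + M) \<le> D * w (i + M)" for i
          unfolding a_def using Dd[of "Uf v (i + M)" "Uf u (i + M)"] w_props(1)[OF w, of "i + M"]
          by (simp add: mult.commute mult_left_mono)
        show "summable (\<lambda>i. a (i + M))" using sa by (rule summable_ignore_initial_segment)
        show "summable (\<lambda>i. D * w (i + M))" using sw by (rule summable_mult)
      qed
      also have "\<dots> = D * (\<Sum>i. w (i + M))" using suminf_mult[OF sw] by simp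
      also have "\<dots> \<le> D * \<rho>" using tail D0 by (intro mult_left_mono) auto
      also have "\<dots> < (D + 1) * \<rho>" using \<rho> by simp
      also have "\<dots> = e / 2" unfolding \<rho>_def using D0 by (simp add: field_simps)
      finally have t1: "(\<Sum>i. a (i + M)) < e / 2" .
      have "(\<Sum>i<M. a i) \<le> (\<Sum>i<M. \<delta> * w i)"
        unfolding a_def using cl w_props(1)[OF w]
        by (intro sum_mono) (simp add: mult.commute mult_left_mono less_imp_le)
      also have "\<dots> = \<delta> * (\<Sum>i<M. w i)" by (simp add: sum_distrib_left)
      also have "\<dots> \<le> \<delta> * 1"
      proof -
        have "(\<Sum>i<M. w i) \<le> suminf w"
          using w_props(1,2)[OF w] by (intro sum_le_suminf) (auto intro: less_imp_le)
        then show ?thesis using w_props(3)[OF w] \<delta> by (intro mult_left_mono) auto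
      qed
      finally have t2: "(\<Sum>i<M. a i) \<le> e / 4" unfolding \<delta>_def by simp
      show ?thesis using split t1 t2 e by linarith
    qed
    show ?thesis using S(1,2) bound by blast
  qed
  have P1: "\<forall>u. Uf u \<in> Xbar w xs \<and> Uf u = Fsys f (Uf u) u \<and> (\<forall>x. x = Fsys f x u \<longrightarrow> x = Uf u)"
  proof (intro allI conjI impI)
    fix u x
    show "Uf u \<in> Xbar w xs" by (rule inX)
    show "Uf u = Fsys f (Uf u) u" by (rule fp)
    assume "x = Fsys f x u"
    then show "x = Uf u" by (rule uniq)
  qed
  have P2: "\<forall>u. \<forall>e>0. \<exists>N. open N \<and> u \<in> N \<and> (\<forall>u'\<in>N. dXbar w (Uf u') (Uf u) < e)"
    using main by blast
  show ?thesis
    by (rule exI[of _ Uf], rule conjI[OF P1 P2])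
qed




theorem lemmaB6:
  fixes f :: "'x::polish_space \<Rightarrow> 'u::polish_space \<Rightarrow> 'x"
    and V :: "(nat \<Rightarrow> 'z::polish_space) \<Rightarrow> (nat \<Rightarrow> 'u)"
    and w :: "nat \<Rightarrow> real"
    and xs :: 'x
  defines "Ubar \<equiv> range V"
  assumes f_cont: "continuous_on UNIV (\<lambda>p. f (fst p) (snd p))"
    and V_cont: "continuous_on UNIV V"
    and V_causal: "causal V"
    and Ubar_Polish: "Polish_top (subtopology euclidean Ubar)"
    and w: "weights w"
    and F_maps: "\<forall>x\<in>Xbar w xs. \<forall>u\<in>Ubar. Fsys f x u \<in> Xbar w xs"
    and F_cont: "\<forall>x\<in>Xbar w xs. \<forall>u\<in>Ubar. \<forall>e>0. \<exists>d>0. \<exists>N. open N \<and> u \<in> N \<and>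
        (\<forall>x'\<in>Xbar w xs. \<forall>u'\<in>N \<inter> Ubar. dXbar w x' x < d \<longrightarrow>
           dXbar w (Fsys f x' u') (Fsys f x u) < e)"
    and cases: "(compact (UNIV :: 'x set) \<and> ESP f) \<or>
      (\<exists>c. 0 < c \<and> c < 1 / wnorm w \<and>
         (\<forall>x1 x2 u. dist (f x1 u) (f x2 u) \<le> c * dist x1 x2))"
  shows "\<exists>Uf. (\<forall>u\<in>Ubar. Uf u \<in> Xbar w xs \<and> Uf u = Fsys f (Uf u) u \<and>
                 (\<forall>x\<in>Xbar w xs. x = Fsys f x u \<longrightarrow> x = Uf u))
           \<and> (\<forall>u\<in>Ubar. \<forall>e>0. \<exists>N. open N \<and> u \<in> N \<and>
                 (\<forall>u'\<in>N \<inter> Ubar. dXbar w (Uf u') (Uf u) < e))"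
  proof -
  from cases show ?thesis
  proof
    assume A: "compact (UNIV :: 'x set) \<and> ESP f"
    obtain Uf where U1: "\<forall>u. Uf u \<in> Xbar w xs \<and> Uf u = Fsys f (Uf u) u \<and> (\<forall>x. x = Fsys f x u \<longrightarrow> x = Uf u)"
      and U2: "\<forall>u. \<forall>e>0. \<exists>N. open N \<and> u \<in> N \<and> (\<forall>u'\<in>N. dXbar w (Uf u') (Uf u) < e)"
      using case_i[OF w f_cont, of xs] A by blast
    have P1: "\<forall>u\<in>Ubar. Uf u \<in> Xbar w xs \<and> Uf u = Fsys f (Uf u) u \<and>
                 (\<forall>x\<in>Xbar w xs. x = Fsys f x u \<longrightarrow> x = Uf u)"
    proof (intro ballI conjI impI)
      fix u x
      have U: "Uf u \<in> Xbar w xs \<and> Uf u = Fsys f (Uf u) u \<and> (\<forall>x. x = Fsys f x u \<longrightarrow> x = Uf u)"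
        by (rule spec[OF U1])
      show "Uf u \<in> Xbar w xs" using U by (rule conjunct1)
      show "Uf u = Fsys f (Uf u) u" using conjunct1[OF conjunct2[OF U]] .
      have imp: "x = Fsys f x u \<longrightarrow> x = Uf u" using conjunct2[OF conjunct2[OF U]] by (rule spec)
      assume "x = Fsys f x u"
      then show "x = Uf u" by (rule mp[OF imp])
    qed
    have P2: "\<forall>u\<in>Ubar. \<forall>e>0. \<exists>N. open N \<and> u \<in> N \<and>
                 (\<forall>u'\<in>N \<inter> Ubar. dXbar w (Uf u') (Uf u) < e)"
    proof (intro ballI allI impI)
      fix u and e :: real assume "0 < e"
      then obtain N where "open N" "u \<in> N" "\<forall>u'\<in>N. dXbar w (Uf u') (Uf u) < e"
        using U2 by blast
      then show "\<exists>N. open N \<and> u \<in> N \<and> (\<forall>u'\<in>N \<inter> Ubar. dXbar w (Uf u') (Uf u) < e)"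
        by blast
    qed
    show ?thesis by (rule exI[of _ Uf], rule conjI[OF P1 P2])
  next
    assume "\<exists>c. 0 < c \<and> c < 1 / wnorm w \<and> (\<forall>x1 x2 u. dist (f x1 u) (f x2 u) \<le> c * dist x1 x2)"
    then obtain c where c: "0 < c" "c < 1 / wnorm w"
      and L: "\<forall>x1 x2 u. dist (f x1 u) (f x2 u) \<le> c * dist x1 x2" by blast
    define q where "q = c * wnorm w"
    have wn: "0 < wnorm w" using wsup1(2,3)[OF w] by linarith
    have q: "0 \<le> q" "q < 1" using c wn unfolding q_def by (auto simp: field_simps)
    have contr: "\<forall>x\<in>Xbar w xs. \<forall>y\<in>Xbar w xs. dXbar w (Fsys f x u) (Fsys f y u) \<le> q * dXbar w x y" for u
      using Fsys_contr[OF w c(1) L] unfolding q_def by blast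
    define Uf where "Uf = (\<lambda>u. SOME y. y \<in> Xbar w xs \<and> y = Fsys f y u)"
    have Uf: "Uf u \<in> Xbar w xs \<and> Uf u = Fsys f (Uf u) u" if "u \<in> Ubar" for u
    proof -
      have "\<exists>y\<in>Xbar w xs. y = Fsys f y u"
        by (rule exist_fp[OF w f_cont _ contr q]) (use F_maps that in blast)
      then have "\<exists>y. y \<in> Xbar w xs \<and> y = Fsys f y u" by blast
      then show ?thesis unfolding Uf_def by (rule someI_ex)
    qed
    have uniq: "x = Uf u" if u: "u \<in> Ubar" and x: "x \<in> Xbar w xs" "x = Fsys f x u" for x u
    proof -
      have "dXbar w (Fsys f x u) (Fsys f (Uf u) u) \<le> q * dXbar w x (Uf u)"
        using contr x(1) Uf[OF u] by blast
      then have le: "dXbar w x (Uf u) \<le> q * dXbar w x (Uf u)"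
        by (simp only: x(2)[symmetric] Uf[OF u, THEN conjunct2, symmetric])
      have "dXbar w x (Uf u) \<le> 0"
      proof (rule ccontr)
        assume "\<not> dXbar w x (Uf u) \<le> 0"
        then have "q * dXbar w x (Uf u) < 1 * dXbar w x (Uf u)"
          using q(2) by (intro mult_strict_right_mono) auto
        then show False using le by simp
      qed
      then show ?thesis using dXbar_zero[OF w x(1)] Uf[OF u] by blast
    qed
    have cont: "\<exists>N. open N \<and> u \<in> N \<and> (\<forall>u'\<in>N \<inter> Ubar. dXbar w (Uf u') (Uf u) < e)"
      if u: "u \<in> Ubar" and e: "e > 0" for u e
    proof -
      have e1: "e * (1 - q) > 0" using e q by simp
      have yin: "Uf u \<in> Xbar w xs" using Uf[OF u] by blast
      obtain d N where d: "d > 0" and N: "open N" "u \<in> N" and H: "\<forall>x'\<in>Xbar w xs. \<forall>u'\<in>N \<inter> Ubar. dXbar w x' (Uf u) < d \<longrightarrow>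
           dXbar w (Fsys f x' u') (Fsys f (Uf u) u) < e * (1 - q)"
        using F_cont[rule_format, OF yin u e1] by blast
      have "dXbar w (Uf u') (Uf u) < e" if u': "u' \<in> N \<inter> Ubar" for u'
      proof -
        have u'U: "u' \<in> Ubar" using u' by blast
        have y'in: "Uf u' \<in> Xbar w xs" using Uf[OF u'U] by blast
        have Fin: "Fsys f (Uf u) u' \<in> Xbar w xs" using F_maps yin u'U by blast
        have a: "dXbar w (Fsys f (Uf u) u') (Fsys f (Uf u) u) < e * (1 - q)"
          using H[rule_format, OF yin u'] d by (simp add: dXbar_self)
        have b: "dXbar w (Fsys f (Uf u') u') (Fsys f (Uf u) u') \<le> q * dXbar w (Uf u') (Uf u)"
          using contr y'in yin by blast
        have t: "dXbar w (Fsys f (Uf u') u') (Fsys f (Uf u) u) \<le>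
            dXbar w (Fsys f (Uf u') u') (Fsys f (Uf u) u') + dXbar w (Fsys f (Uf u) u') (Fsys f (Uf u) u)"
        proof (rule dXbar_triangle[OF w _ Fin])
          show "Fsys f (Uf u') u' \<in> Xbar w xs" using F_maps y'in u'U by blast
          show "Fsys f (Uf u) u \<in> Xbar w xs" using F_maps yin u by blast
        qed
        have e1': "Fsys f (Uf u') u' = Uf u'" using conjunct2[OF Uf[OF u'U]] by (rule sym)
        have e2': "Fsys f (Uf u) u = Uf u" using conjunct2[OF Uf[OF u]] by (rule sym)
        have eqD: "dXbar w (Fsys f (Uf u') u') (Fsys f (Uf u) u) = dXbar w (Uf u') (Uf u)"
          by (simp only: e1' e2')
        have "dXbar w (Uf u') (Uf u) < q * dXbar w (Uf u') (Uf u) + e * (1 - q)"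
          using t eqD a b by linarith
        then have "(1 - q) * dXbar w (Uf u') (Uf u) < (1 - q) * e" by (simp add: algebra_simps)
        then show ?thesis using q by (simp add: mult_less_cancel_left_pos)
      qed
      then show ?thesis using N by blast
    qed
    have P1: "\<forall>u\<in>Ubar. Uf u \<in> Xbar w xs \<and> Uf u = Fsys f (Uf u) u \<and>
                 (\<forall>x\<in>Xbar w xs. x = Fsys f x u \<longrightarrow> x = Uf u)"
    proof (intro ballI conjI impI)
      fix u x assume u: "u \<in> Ubar"
      show "Uf u \<in> Xbar w xs" using Uf[OF u] by (rule conjunct1)
      show "Uf u = Fsys f (Uf u) u" using Uf[OF u] by (rule conjunct2)
      assume "x \<in> Xbar w xs" "x = Fsys f x u"
      then show "x = Uf u" by (rule uniq[OF u])
    qed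
    have P2: "\<forall>u\<in>Ubar. \<forall>e>0. \<exists>N. open N \<and> u \<in> N \<and>
                 (\<forall>u'\<in>N \<inter> Ubar. dXbar w (Uf u') (Uf u) < e)"
      using cont by blast
    show ?thesis by (rule exI[of _ Uf], rule conjI[OF P1 P2])
  qed
qed

end
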